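(* Let $G$ be a finite connected graph with $\chi(G)<0$ and no vertices of valence 1 or 2. If $\ell\in\mathcal M(G)$ satisfies $\mathfrak h_G(\ell)<1$, then $F_G(\ell)>0$.
   Context: $G$ has oriented edges $E$, involution $e\mapsto\bar e$, orientation $E_+$; $\mathcal M(G)=\mathbb R_{>0}^{|E_+|}$ is the set of length functions $\ell\colon E_+\to\mathbb R_{>0}$ (extended to $E$ by $\ell(\bar e)=\ell(e)$). Entropy $\mathfrak h_G(\ell)=\lim_{t\to\infty}\frac1t\log\#\{\text{based circuits }\gamma:\ell(\gamma)\le t\}$, where a based circuit is a reduced closed edge path $(e_1,\dots,e_n)$ with $e_{i+1}\ne\bar e_i$ and $e_n\neq\bar e_1$. $A_G$ is the $|E|\times|E|$ matrix with $A_G(e,e')=1$ if $\tau(e)=o(e')$ and $e'\ne\bar e$, else $0$; $A_{G,\ell}(e,e')=A_G(e,e')\exp(-\ell(e))$, and $F_G(\ell)=\det(I-A_{G,\ell})$. *)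

theory Defs
  imports "HOL-Analysis.Analysis"
begin

text \<open>A finite graph in Serre's sense: vertex type 'v (all of it), oriented edge type 'e
  (all of it), origin map org, terminus map tau, fixed-point-free involution bar
  with org (bar e) = tau e.\<close>

definition serre_graph :: "('e \<Rightarrow> 'v) \<Rightarrow> ('e \<Rightarrow> 'v) \<Rightarrow> ('e \<Rightarrow> 'e) \<Rightarrow> bool" where
  "serre_graph org tau bar \<longleftrightarrow>
     (\<forall>e. bar (bar e) = e \<and> bar e \<noteq> e \<and> org (bar e) = tau e)"

definition graph_connected :: "('e \<Rightarrow> 'v) \<Rightarrow> ('e \<Rightarrow> 'v) \<Rightarrow> bool" where
  "graph_connected org tau \<longleftrightarrow>
     (\<forall>v w. (\<lambda>x y. \<exists>e. org e = x \<and> tau e = y)\<^sup>*\<^sup>* v w)"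

text \<open>Valence of v: number of oriented edges with origin v (a loop counts twice).\<close>
definition valence :: "('e::finite \<Rightarrow> 'v) \<Rightarrow> 'v \<Rightarrow> nat" where
  "valence org v = card {e. org e = v}"

text \<open>Euler characteristic |V| - |E_+| where |E_+| = |E| / 2.\<close>
definition euler_char :: "('e::finite \<Rightarrow> 'v::finite) \<Rightarrow> real" where
  "euler_char org = real CARD('v) - real CARD('e) / 2"

text \<open>Length functions: positive and bar-invariant (equivalently, positive functions on E_+).\<close>
definition length_fun :: "('e \<Rightarrow> 'e) \<Rightarrow> ('e \<Rightarrow> real) \<Rightarrow> bool" where
  "length_fun bar l \<longleftrightarrow> (\<forall>e. l e > 0 \<and> l (bar e) = l e)"

text \<open>Based circuit: nonempty reduced closed edge path (indices cyclic).\<close>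
definition based_circuit :: "('e \<Rightarrow> 'v) \<Rightarrow> ('e \<Rightarrow> 'v) \<Rightarrow> ('e \<Rightarrow> 'e) \<Rightarrow> 'e list \<Rightarrow> bool" where
  "based_circuit org tau bar \<gamma> \<longleftrightarrow> \<gamma> \<noteq> [] \<and>
     (\<forall>i < length \<gamma>. tau (\<gamma> ! i) = org (\<gamma> ! ((i + 1) mod length \<gamma>)) \<and>
                      \<gamma> ! ((i + 1) mod length \<gamma>) \<noteq> bar (\<gamma> ! i))"

definition circuit_count :: "('e \<Rightarrow> 'v) \<Rightarrow> ('e \<Rightarrow> 'v) \<Rightarrow> ('e \<Rightarrow> 'e) \<Rightarrow> ('e \<Rightarrow> real) \<Rightarrow> real \<Rightarrow> nat" where
  "circuit_count org tau bar l t = card {\<gamma>. based_circuit org tau bar \<gamma> \<and> sum_list (map l \<gamma>) \<le> t}"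

definition entropy :: "('e \<Rightarrow> 'v) \<Rightarrow> ('e \<Rightarrow> 'v) \<Rightarrow> ('e \<Rightarrow> 'e) \<Rightarrow> ('e \<Rightarrow> real) \<Rightarrow> real" where
  "entropy org tau bar l = Lim at_top (\<lambda>t. ln (real (circuit_count org tau bar l t)) / t)"

definition trans_matrix :: "('e::finite \<Rightarrow> 'v) \<Rightarrow> ('e \<Rightarrow> 'v) \<Rightarrow> ('e \<Rightarrow> 'e) \<Rightarrow> ('e \<Rightarrow> real) \<Rightarrow> real^'e^'e" where
  "trans_matrix org tau bar l = (\<chi> e e'. if tau e = org e' \<and> e' \<noteq> bar e then exp (- l e) else 0)"

definition F_G :: "('e::finite \<Rightarrow> 'v) \<Rightarrow> ('e \<Rightarrow> 'v) \<Rightarrow> ('e \<Rightarrow> 'e) \<Rightarrow> ('e \<Rightarrow> real) \<Rightarrow> real" where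
  "F_G org tau bar l = det (mat 1 - trans_matrix org tau bar l)"

end

theory Submission
  imports Defs "HOL-Real_Asymp.Real_Asymp"
begin


lemma successively_snoc: "successively P (xs @ [a]) \<Longrightarrow> P a b \<Longrightarrow> successively P (xs @ [a, b])"
proof -
  assume "successively P (xs @ [a])" "P a b"
  hence "successively P ((xs @ [a]) @ [b])" by (simp add: successively_append_iff)
  thus ?thesis by simp
qed

locale gsetting =
  fixes org tau :: "'e::finite \<Rightarrow> 'v::finite" and bar :: "'e \<Rightarrow> 'e" and l :: "'e \<Rightarrow> real"
  assumes serre: "serre_graph org tau bar"
    and conn: "graph_connected org tau"
    and chi: "euler_char org < 0"
    and val12: "\<forall>v. valence org v \<noteq> 1 \<and> valence org v \<noteq> 2"
    and lenf: "length_fun bar l"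
begin

lemma bar_bar[simp]: "bar (bar e) = e" using serre unfolding serre_graph_def by blast
lemma bar_neq: "bar e \<noteq> e" using serre unfolding serre_graph_def by blast
lemma org_bar[simp]: "org (bar e) = tau e" using serre unfolding serre_graph_def by blast
lemma tau_bar[simp]: "tau (bar e) = org e" by (metis org_bar bar_bar)
lemma l_pos: "l e > 0" using lenf unfolding length_fun_def by blast
lemma l_bar[simp]: "l (bar e) = l e" using lenf unfolding length_fun_def by blast

definition adj :: "'e \<Rightarrow> 'e \<Rightarrow> bool" where
  "adj e f \<longleftrightarrow> tau e = org f \<and> f \<noteq> bar e"

lemma card_in_eq_out: "card {f. tau f = v} = card {g. org g = v}"
proof -
  have "bar ` {g. org g = v} = {f. tau f = v}"
    by (auto simp: image_iff) (metis bar_bar tau_bar)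
  moreover have "inj_on bar {g. org g = v}" by (metis bar_bar inj_onI)
  ultimately show ?thesis by (metis card_image)
qed

lemma valence_ne0: "valence org v \<noteq> 0"
proof
  assume h: "valence org v = 0"
  hence emp: "{e. org e = v} = {}" unfolding valence_def by simp
  have allv: "w = v" for w
  proof -
    have "(\<lambda>x y. \<exists>e. org e = x \<and> tau e = y)\<^sup>*\<^sup>* v w" using conn unfolding graph_connected_def by blast
    then show ?thesis
      by (cases rule: converse_rtranclpE) (use emp in auto)
  qed
  hence "(UNIV::'v set) = {v}" by blast
  hence "CARD('v) = 1" by (metis card_1_singleton_iff One_nat_def)
  with chi have "CARD('e) > 2" unfolding euler_char_def by simp
  hence "(UNIV::'e set) \<noteq> {}" by auto
  then obtain e :: 'e where True by blast
  have "org e = v" using allv by blast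
  with emp show False by blast
qed

lemma valence_ge3: "card {g. org g = v} \<ge> 3"
proof -
  have "valence org v \<noteq> 1" "valence org v \<noteq> 2" "valence org v \<noteq> 0" using val12 valence_ne0[of v] by auto
  thus ?thesis unfolding valence_def by linarith
qed

lemma adj_bar: "adj e f \<Longrightarrow> adj (bar f) (bar e)"
  unfolding adj_def by (auto simp: bar_neq)

lemma ex_succ: "\<exists>g. adj e g"
proof -
  have "card {g. org g = tau e} \<ge> 3" by (rule valence_ge3)
  have "\<not> {g. org g = tau e} \<subseteq> {bar e}"
  proof
    assume "{g. org g = tau e} \<subseteq> {bar e}"
    hence "card {g. org g = tau e} \<le> card {bar e}" by (intro card_mono) auto
    with \<open>card {g. org g = tau e} \<ge> 3\<close> show False by simp
  qed
  thus ?thesis unfolding adj_def by auto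
qed

lemma card_fibers: "card (X::'e set) = (\<Sum>v\<in>UNIV. card {x\<in>X. h x = (v::'v)})"
proof -
  have "(\<Sum>v\<in>UNIV. sum (\<lambda>_. 1::nat) {x\<in>X. h x = v}) = sum (\<lambda>_. 1) X"
    by (rule sum.group) auto
  thus ?thesis by simp
qed

lemma succ_closed_univ:
  assumes cl: "\<And>f g. f \<in> X \<Longrightarrow> adj f g \<Longrightarrow> g \<in> X" and ne: "X \<noteq> {}"
  shows "X = UNIV"
proof -
  define ind where "ind v = card {f\<in>X. tau f = v}" for v
  define outd where "outd v = card {f\<in>X. org f = v}" for v
  have fin: "finite A" for A :: "'e set" by simp
  have key: "ind v \<le> outd v \<and> (ind v \<ge> 1 \<longrightarrow> ind v = 1 \<longrightarrow> ind v < outd v)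
           \<and> (ind v \<ge> 2 \<longrightarrow> {g. org g = v} \<subseteq> X)" for v
  proof (cases "ind v = 0")
    case True thus ?thesis by simp
  next
    case False
    then obtain f where f: "f \<in> X" "tau f = v" unfolding ind_def
      by (metis (mono_tags, lifting) Collect_empty_eq card.empty)
    have sub1: "{g. org g = v} \<subseteq> insert (bar f) {g\<in>X. org g = v}"
      using cl[OF f(1)] f(2) unfolding adj_def by auto
    have "card {g. org g = v} \<le> Suc (outd v)"
      using card_mono[OF _ sub1] card_insert_le_m1 unfolding outd_def
      by (metis card_insert_if fin le_SucI)
    hence o1: "outd v + 1 \<ge> card {g. org g = v}" by simp
    have iv: "ind v \<le> card {g. org g = v}" unfolding ind_def card_in_eq_out[symmetric]
      by (rule card_mono) auto
    have three: "card {g. org g = v} \<ge> 3" by (rule valence_ge3)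
    show ?thesis
    proof (cases "ind v \<ge> 2")
      case True
      have "\<not> {f\<in>X. tau f = v} \<subseteq> {f}"
      proof
        assume "{f\<in>X. tau f = v} \<subseteq> {f}"
        hence "ind v \<le> 1" unfolding ind_def by (metis card_mono fin card.insert card.empty finite.emptyI empty_iff One_nat_def)
        with True show False by simp
      qed
      then obtain f2 where f2: "f2 \<in> X" "tau f2 = v" "f2 \<noteq> f" by auto
      have all: "{g. org g = v} \<subseteq> X"
      proof
        fix g assume "g \<in> {g. org g = v}"
        hence "org g = v" by simp
        show "g \<in> X"
        proof (cases "g = bar f")
          case True
          hence "g \<noteq> bar f2" using f2(3) by (metis bar_bar)
          thus ?thesis using cl[OF f2(1)] f2(2) \<open>org g = v\<close> unfolding adj_def by auto
        next
          case False
          thus ?thesis using cl[OF f(1)] f(2) \<open>org g = v\<close> unfolding adj_def by auto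
        qed
      qed
      hence "outd v = card {g. org g = v}" unfolding outd_def by (metis (mono_tags, lifting) Collect_cong subsetD mem_Collect_eq)
      with iv all True show ?thesis by simp
    next
      case False
      hence "ind v = 1" using \<open>ind v \<noteq> 0\<close> by simp
      with o1 three show ?thesis by simp
    qed
  qed
  have s1: "card X = (\<Sum>v\<in>UNIV. ind v)" unfolding ind_def by (rule card_fibers)
  have s2: "card X = (\<Sum>v\<in>UNIV. outd v)" unfolding outd_def by (rule card_fibers)
  have eq: "ind v = outd v" for v
  proof (rule ccontr)
    assume "ind v \<noteq> outd v"
    hence "ind v < outd v" using key[of v] by simp
    hence "(\<Sum>v\<in>UNIV. ind v) < (\<Sum>v\<in>UNIV. outd v)"
      by (intro sum_strict_mono_ex1) (use key in auto)
    with s1 s2 show False by simp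
  qed
  define W where "W = {v. ind v \<ge> 1}"
  have Win: "v \<in> W \<Longrightarrow> org g = v \<Longrightarrow> g \<in> X" for v g
  proof -
    assume "v \<in> W" "org g = v"
    hence "ind v \<ge> 1" unfolding W_def by simp
    moreover have "ind v \<noteq> 1" using key[of v] eq[of v] by auto
    ultimately have "ind v \<ge> 2" by simp
    with key[of v] \<open>org g = v\<close> show "g \<in> X" by auto
  qed
  have tauW: "g \<in> X \<Longrightarrow> tau g \<in> W" for g
  proof -
    assume "g \<in> X"
    hence "{f\<in>X. tau f = tau g} \<noteq> {}" by auto
    hence "card {f\<in>X. tau f = tau g} \<noteq> 0" by simp
    hence "card {f\<in>X. tau f = tau g} \<ge> 1" by linarith
    thus ?thesis unfolding W_def ind_def by simp
  qed
  obtain f0 where f0: "f0 \<in> X" using ne by auto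
  have allW: "w \<in> W" for w
  proof -
    have "(\<lambda>x y. \<exists>e. org e = x \<and> tau e = y)\<^sup>*\<^sup>* (tau f0) w" using conn unfolding graph_connected_def by blast
    then show ?thesis
    proof (induction rule: rtranclp_induct)
      case base thus ?case using tauW[OF f0] .
    next
      case (step y z)
      then obtain e where "org e = y" "tau e = z" by blast
      with Win[OF step.IH] tauW show ?case by blast
    qed
  qed
  show ?thesis using Win allW by blast
qed

definition reach :: "'e \<Rightarrow> 'e \<Rightarrow> bool" where
  "reach e f \<longleftrightarrow> (\<exists>ws. successively adj (e # ws @ [f]))"

lemma reach_all: "reach e f"
proof -
  have "{f. reach e f} = UNIV"
  proof (rule succ_closed_univ)
    fix f g assume "f \<in> {f. reach e f}" "adj f g"
    then obtain ws where "successively adj (e # ws @ [f])" unfolding reach_def by auto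
    hence "successively adj ((e # ws) @ [f, g])"
      using \<open>adj f g\<close> successively_snoc[of adj "e#ws" f g] by simp
    hence "successively adj (e # (ws @ [f]) @ [g])" by simp
    thus "g \<in> {f. reach e f}" unfolding reach_def by blast
  next
    obtain g where "adj e g" using ex_succ by blast
    hence "reach e g" unfolding reach_def by (intro exI[of _ "[]"]) simp
    thus "{f. reach e f} \<noteq> {}" by blast
  qed
  thus ?thesis by blast
qed

end



lemma ln1p_over_t:
  fixes lam :: real assumes "lam > 0"
  shows "((\<lambda>t. ln (1 + t/lam) / t) \<longlongrightarrow> 0) at_top"
  using assms by real_asymp

lemma fekete_like:
  fixes L :: "real \<Rightarrow> real" and lam t0 \<alpha> :: real
  assumes lam: "lam > 0" and t0: "t0 \<ge> 0"
    and ge1: "\<And>t. t \<ge> t0 \<Longrightarrow> L t \<ge> 1"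
    and nn: "\<And>t. L t \<ge> 0"
    and up: "\<And>t. t \<ge> t0 \<Longrightarrow> ln (L t) \<le> \<alpha> * t"
    and sm: "\<And>a b. a \<ge> 0 \<Longrightarrow> b \<ge> 0 \<Longrightarrow> L a * L b \<le> (1 + a/lam) * L (a+b)"
  shows "\<exists>H. ((\<lambda>t. ln (L t) / t) \<longlongrightarrow> H) at_top"
proof -
  define T0 where "T0 = t0 + 1"
  define \<phi> where "\<phi> T = (ln (L T) - ln (1 + T/lam)) / T" for T
  define H where "H = (SUP T\<in>{T0..}. \<phi> T)"
  have T0pos: "T0 > 0" using t0 unfolding T0_def by simp
  have lnpos: "T \<ge> 0 \<Longrightarrow> ln (1 + T/lam) \<ge> 0" for T using lam by simp
  have phile: "\<phi> T \<le> \<alpha>" if "T \<in> {T0..}" for T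
  proof -
    have T: "T \<ge> t0" "T > 0" using that T0pos unfolding T0_def by auto
    have "ln (L T) - ln (1 + T/lam) \<le> \<alpha> * T" using up[OF T(1)] lnpos[of T] T by linarith
    thus ?thesis unfolding \<phi>_def using T(2) by (simp add: pos_divide_le_eq)
  qed
  have bdd: "bdd_above (\<phi> ` {T0..})" using phile by (intro bdd_aboveI2) 
  have ne: "{T0..} \<noteq> {}" by simp
  have phiH: "T \<ge> T0 \<Longrightarrow> \<phi> T \<le> H" for T unfolding H_def using bdd by (intro cSUP_upper) auto
  have "((\<lambda>t. ln (L t) / t) \<longlongrightarrow> H) at_top"
  proof (rule order_tendstoI)
    fix a assume "a > H"
    have ev1: "eventually (\<lambda>t. ln (1 + t/lam) / t < a - H) at_top"
      using order_tendstoD(2)[OF ln1p_over_t[OF lam], of "a - H"] \<open>a > H\<close> by simp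
    have ev2: "eventually (\<lambda>t. t \<ge> T0) at_top" by (rule eventually_ge_at_top)
    show "eventually (\<lambda>t. ln (L t) / t < a) at_top"
      using ev1 ev2
    proof eventually_elim
      case (elim t)
      have "ln (L t) / t = \<phi> t + ln (1 + t/lam) / t" unfolding \<phi>_def by (simp add: diff_divide_distrib)
      with phiH[OF elim(2)] elim(1) show ?case by linarith
    qed
  next
    fix a assume "a < H"
    then obtain T where T: "T \<in> {T0..}" "a < \<phi> T"
      using less_cSUP_iff[OF ne bdd] unfolding H_def by blast
    define p where "p = \<phi> T"
    have Tpos: "T > 0" and Tt0: "T \<ge> t0" using T(1) T0pos unfolding T0_def by auto
    have LT: "L T \<ge> 1" using ge1[OF Tt0] .
    have expTp: "exp (T * p) = L T / (1 + T/lam)"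
    proof -
      have "T * p = ln (L T) - ln (1 + T/lam)" unfolding p_def \<phi>_def using Tpos by simp
      hence "exp (T * p) = exp (ln (L T)) / exp (ln (1 + T/lam))" by (simp add: exp_diff)
      also have "\<dots> = L T / (1 + T/lam)"
      proof -
        have "1 + T/lam > 0" using lam Tpos by (simp add: add_pos_nonneg)
        thus ?thesis using LT by simp
      qed
      finally show ?thesis .
    qed
    have step: "L (T + b) \<ge> exp (T * p) * L b" if "b \<ge> 0" for b
    proof -
      have d: "1 + T/lam > 0" using lam Tpos by (simp add: add_pos_nonneg)
      have "L T * L b \<le> (1 + T/lam) * L (T + b)" using sm[of T b] Tpos that by simp
      hence "L T * L b / (1 + T/lam) \<le> L (T + b)" using d by (simp add: divide_le_eq mult.commute)
      thus ?thesis unfolding expTp by simp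
    qed
    have iter: "L (real k * T + r) \<ge> exp (real k * T * p) * L r" if "r \<ge> 0" for k :: nat and r
    proof (induction k)
      case 0 thus ?case by simp
    next
      case (Suc k)
      have nn2: "real k * T + r \<ge> 0" using Tpos that by simp
      have "L (real (Suc k) * T + r) = L (T + (real k * T + r))" by (simp add: algebra_simps)
      also have "\<dots> \<ge> exp (T * p) * L (real k * T + r)" using step[OF nn2] .
      also have "exp (T * p) * L (real k * T + r) \<ge> exp (T * p) * (exp (real k * T * p) * L r)"
        using Suc.IH by (intro mult_left_mono) auto
      also have "exp (T * p) * (exp (real k * T * p) * L r) = exp (real (Suc k) * T * p) * L r"
        by (simp add: algebra_simps exp_add[symmetric])
      finally show ?case by simp
    qed
    have main: "ln (L t) \<ge> real (nat \<lfloor>(t - t0)/T\<rfloor>) * T * p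
       \<and> real (nat \<lfloor>(t - t0)/T\<rfloor>) * T \<le> t - t0 \<and> real (nat \<lfloor>(t - t0)/T\<rfloor>) * T > t - t0 - T"
      if "t \<ge> t0" for t
    proof -
      define k where "k = nat \<lfloor>(t - t0)/T\<rfloor>"
      have q: "(t - t0)/T \<ge> 0" using that Tpos by simp
      have k1: "real k \<le> (t - t0)/T" unfolding k_def using q by linarith
      have k2: "real k > (t - t0)/T - 1" unfolding k_def using q by linarith
      have kT1: "real k * T \<le> t - t0" using k1 Tpos by (simp add: le_divide_eq)
      have "(t - t0)/T < real k + 1" using k2 by simp
      hence "t - t0 < (real k + 1) * T" using Tpos by (simp add: divide_less_eq)
      hence kT2: "real k * T > t - t0 - T" by (simp add: algebra_simps)
      define r where "r = t - real k * T"
      have r1: "r \<ge> t0" unfolding r_def using kT1 by simp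
      have r0: "r \<ge> 0" using r1 t0 by simp
      have "L t \<ge> exp (real k * T * p) * L r" using iter[OF r0, of k] unfolding r_def by simp
      also have "exp (real k * T * p) * L r \<ge> exp (real k * T * p)" using ge1[OF r1] by simp
      finally have "L t \<ge> exp (real k * T * p)" .
      moreover have "exp (real k * T * p) > 0" by simp
      ultimately have Lp: "L t > 0" "L t \<ge> exp (real k * T * p)" by linarith+
      have "ln (L t) \<ge> ln (exp (real k * T * p))" using Lp ln_le_cancel_iff[of "exp (real k * T * p)" "L t"] by simp
      thus ?thesis using kT1 kT2 unfolding k_def by simp
    qed
    show "eventually (\<lambda>t. a < ln (L t) / t) at_top"
    proof (cases "p \<ge> 0")
      case True
      have pa: "p - a > 0" using T(2) unfolding p_def by simp
      have ev: "eventually (\<lambda>t. t > max (t0 + 1) (p * (t0 + T) / (p - a))) at_top"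
        by (rule eventually_gt_at_top)
      show ?thesis using ev
      proof eventually_elim
        case (elim t)
        hence tt: "t > t0" "t > p * (t0 + T) / (p - a)" by auto
        have tpos: "t > 0" using tt t0 by simp
        obtain k where m: "ln (L t) \<ge> k * T * p" "k * T > t - t0 - T" using main[of t] tt by force
        have "(t - t0 - T) * p \<le> k * T * p" using m(2) True by (intro mult_right_mono) auto
        hence A: "ln (L t) \<ge> (t - t0 - T) * p" using m(1) by linarith
        have "(p - a) * t > p * (t0 + T)" using tt(2) pa by (simp add: divide_less_eq mult.commute)
        hence "(t - t0 - T) * p > a * t" by (simp add: algebra_simps)
        with A have "ln (L t) > a * t" by linarith
        thus ?case using tpos by (simp add: less_divide_eq mult.commute)
      qed
    next
      case False
      show ?thesis using eventually_gt_at_top[of t0]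
      proof eventually_elim
        case (elim t)
        have tpos: "t > 0" using elim t0 by simp
        obtain k where m: "ln (L t) \<ge> k * T * p" "k * T \<le> t - t0" "k * T > t - t0 - T" using main[of t] elim by force
        have "k * T \<le> t" using m(2) t0 by simp
        hence "t * p \<le> k * T * p" using False by (intro mult_right_mono_neg) auto
        hence "ln (L t) \<ge> t * p" using m(1) by linarith
        hence "ln (L t) / t \<ge> p" using tpos by (simp add: le_divide_eq mult.commute)
        thus ?case using T(2) unfolding p_def by linarith
      qed
    qed
  qed
  thus ?thesis by blast
qed

lemma ev_const_over_t: "\<epsilon> > 0 \<Longrightarrow> c \<ge> 0 \<Longrightarrow> eventually (\<lambda>t::real. c / t < \<epsilon>) at_top"
proof -
  assume e: "\<epsilon> > 0" and c: "c \<ge> 0"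
  show ?thesis using eventually_gt_at_top[of "max 1 (c/\<epsilon>)"]
  proof eventually_elim
    case (elim t)
    hence t: "t > 0" "t > c/\<epsilon>" by auto
    hence "c < \<epsilon> * t" using e by (simp add: divide_less_eq mult.commute)
    thus ?case using t by (simp add: divide_less_eq mult.commute)
  qed
qed

lemma max_combine:
  fixes L :: "'i::finite \<Rightarrow> real \<Rightarrow> real" and H :: "'i \<Rightarrow> real"
  assumes lim: "\<And>i. ((\<lambda>t. ln (L i t)/t) \<longlongrightarrow> H i) at_top"
    and ge1: "\<And>i. eventually (\<lambda>t. L i t \<ge> 1) at_top"
  shows "((\<lambda>t. ln (\<Sum>i\<in>UNIV. L i t)/t) \<longlongrightarrow> Max (range H)) at_top"
proof (rule order_tendstoI)
  define Hm where "Hm = Max (range H)"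
  have HmH: "H i \<le> Hm" for i unfolding Hm_def by simp
  have allge1: "eventually (\<lambda>t. \<forall>i. L i t \<ge> 1) at_top" using ge1 by (intro eventually_all_finite) auto
  {
    fix a assume a: "a > Max (range H)"
    define a' where "a' = (a + Hm)/2"
    have a'1: "a' > Hm" "a - a' > 0" using a unfolding a'_def Hm_def by auto
    have "eventually (\<lambda>t. \<forall>i. ln (L i t)/t < a') at_top"
    proof (rule eventually_all_finite)
      fix i show "eventually (\<lambda>t. ln (L i t)/t < a') at_top"
        using order_tendstoD(2)[OF lim[of i], of a'] HmH[of i] a'1 by linarith
    qed
    moreover have "eventually (\<lambda>t. ln (real CARD('i)) / t < a - a') at_top"
      by (rule ev_const_over_t) (use a'1 in auto)
    moreover note allge1
    moreover have "eventually (\<lambda>t::real. t > 0) at_top" by (rule eventually_gt_at_top)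
    ultimately show "eventually (\<lambda>t. ln (\<Sum>i\<in>UNIV. L i t)/t < a) at_top"
    proof eventually_elim
      case (elim t)
      have lt: "L i t < exp (a' * t)" for i
      proof -
        have "ln (L i t) < a' * t" using elim(1) elim(4) by (simp add: divide_less_eq mult.commute)
        hence "exp (ln (L i t)) < exp (a' * t)" by simp
        thus ?thesis using elim(3)[rule_format, of i] by simp
      qed
      have "(\<Sum>i\<in>UNIV. L i t) \<le> (\<Sum>i\<in>(UNIV::'i set). exp (a' * t))"
        using lt by (intro sum_mono) (simp add: less_imp_le)
      also have "\<dots> = real CARD('i) * exp (a' * t)" by simp
      finally have S: "(\<Sum>i\<in>UNIV. L i t) \<le> real CARD('i) * exp (a' * t)" .
      have Spos: "(\<Sum>i\<in>UNIV. L i t) > 0"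
        by (rule sum_pos) (use elim(3) in \<open>auto intro: less_le_trans[OF zero_less_one]\<close>)
      have "ln (\<Sum>i\<in>UNIV. L i t) \<le> ln (real CARD('i) * exp (a' * t))"
        using S Spos by (subst ln_le_cancel_iff) auto
      also have "\<dots> = ln (real CARD('i)) + a' * t" by (simp add: ln_mult)
      finally have "ln (\<Sum>i\<in>UNIV. L i t) / t \<le> ln (real CARD('i)) / t + a'"
        using elim(4) by (simp add: divide_le_eq add_divide_distrib algebra_simps)
      thus ?case using elim(2) by linarith
    qed
  }
  {
    fix a assume a: "a < Max (range H)"
    have "Max (range H) \<in> range H" by (rule Max_in) auto
    then obtain i where i: "H i = Max (range H)" by (metis imageE)
    have "eventually (\<lambda>t. a < ln (L i t)/t) at_top" using order_tendstoD(1)[OF lim[of i]] a i by simp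
    moreover note allge1
    moreover have "eventually (\<lambda>t::real. t > 0) at_top" by (rule eventually_gt_at_top)
    ultimately show "eventually (\<lambda>t. a < ln (\<Sum>i\<in>UNIV. L i t)/t) at_top"
    proof eventually_elim
      case (elim t)
      have "L i t \<le> (\<Sum>j\<in>UNIV. L j t)"
        by (rule member_le_sum) (use elim(2) in \<open>auto intro: order_trans[OF zero_le_one]\<close>)
      hence "ln (L i t) \<le> ln (\<Sum>j\<in>UNIV. L j t)" using elim(2)[rule_format, of i]
        by (subst ln_le_cancel_iff) auto
      hence "ln (L i t)/t \<le> ln (\<Sum>j\<in>UNIV. L j t)/t" using elim(3) by (simp add: divide_right_mono)
      thus ?case using elim(1) by linarith
    qed
  }
qed




context gsetting begin

definition ell :: "'e list \<Rightarrow> real" where "ell \<gamma> = sum_list (map l \<gamma>)"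

lemma ell_simps[simp]: "ell [] = 0" "ell (x # xs) = l x + ell xs" "ell (xs @ ys) = ell xs + ell ys"
  unfolding ell_def by auto

definition lam :: real where "lam = Min (range l)"

lemma lam_le: "lam \<le> l e" unfolding lam_def by simp
lemma lam_pos: "lam > 0"
proof -
  have "lam \<in> range l" unfolding lam_def by (rule Min_in) auto
  thus ?thesis using l_pos by auto
qed

lemma ell_ge: "ell \<gamma> \<ge> lam * real (length \<gamma>)"
proof (induction \<gamma>)
  case Nil thus ?case by simp
next
  case (Cons x xs) thus ?case using lam_le[of x] by (simp add: algebra_simps)
qed

lemma ell_nonneg: "ell \<gamma> \<ge> 0"
proof -
  have "lam * real (length \<gamma>) \<ge> 0" using lam_pos by simp
  thus ?thesis using ell_ge[of \<gamma>] by linarith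
qed

lemma len_le: "ell \<gamma> \<le> t \<Longrightarrow> length \<gamma> \<le> nat \<lfloor>t / lam\<rfloor>"
proof -
  assume "ell \<gamma> \<le> t"
  hence "lam * real (length \<gamma>) \<le> t" using ell_ge[of \<gamma>] by linarith
  hence "real (length \<gamma>) \<le> t / lam" using lam_pos by (simp add: le_divide_eq mult.commute)
  thus ?thesis by (rule le_nat_floor)
qed

lemma fin_bounded: "finite {\<gamma>. P \<gamma> \<and> ell \<gamma> \<le> t}"
proof (rule finite_subset)
  show "{\<gamma>. P \<gamma> \<and> ell \<gamma> \<le> t} \<subseteq> {xs. set xs \<subseteq> UNIV \<and> length xs \<le> nat \<lfloor>t / lam\<rfloor>}"
    using len_le by auto
  show "finite {xs. set xs \<subseteq> (UNIV::'e set) \<and> length xs \<le> nat \<lfloor>t / lam\<rfloor>}"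
    by (rule finite_lists_length_le) simp
qed

lemma bc_iff: "based_circuit org tau bar \<gamma> \<longleftrightarrow> \<gamma> \<noteq> [] \<and> successively adj (\<gamma> @ [hd \<gamma>])"
proof (cases "\<gamma> = []")
  case True thus ?thesis unfolding based_circuit_def by simp
next
  case False
  define n where "n = length \<gamma>"
  have n: "n > 0" using False unfolding n_def by simp
  have nth1: "(\<gamma> @ [hd \<gamma>]) ! i = \<gamma> ! i" if "i < n" for i using that unfolding n_def by (simp add: nth_append)
  have nth2: "(\<gamma> @ [hd \<gamma>]) ! Suc i = \<gamma> ! ((i + 1) mod n)" if "i < n" for i
  proof (cases "Suc i < n")
    case True thus ?thesis unfolding n_def by (simp add: nth_append)
  next
    case False
    hence "Suc i = n" using that by simp
    thus ?thesis using \<open>\<gamma> \<noteq> []\<close> unfolding n_def by (simp add: nth_append hd_conv_nth)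
  qed
  have "based_circuit org tau bar \<gamma> \<longleftrightarrow> (\<forall>i<n. adj (\<gamma> ! i) (\<gamma> ! ((i + 1) mod n)))"
    unfolding based_circuit_def adj_def n_def using False by auto
  also have "\<dots> \<longleftrightarrow> (\<forall>i. Suc i < length (\<gamma> @ [hd \<gamma>]) \<longrightarrow> adj ((\<gamma> @ [hd \<gamma>]) ! i) ((\<gamma> @ [hd \<gamma>]) ! Suc i))"
    using nth1 nth2 unfolding n_def by auto
  finally show ?thesis using False by (simp add: successively_conv_nth)
qed

definition Lset :: "'e \<Rightarrow> real \<Rightarrow> 'e list set" where
  "Lset e t = {\<gamma>. based_circuit org tau bar \<gamma> \<and> hd \<gamma> = e \<and> ell \<gamma> \<le> t}"
definition Lc :: "'e \<Rightarrow> real \<Rightarrow> real" where "Lc e t = real (card (Lset e t))"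

lemma fin_Lset: "finite (Lset e t)" unfolding Lset_def using fin_bounded[of "\<lambda>\<gamma>. based_circuit org tau bar \<gamma> \<and> hd \<gamma> = e"] by simp

lemma count_sum: "real (circuit_count org tau bar l t) = (\<Sum>e\<in>UNIV. Lc e t)"
proof -
  define X where "X = {\<gamma>. based_circuit org tau bar \<gamma> \<and> ell \<gamma> \<le> t}"
  have fX: "finite X" unfolding X_def by (rule fin_bounded)
  have "(\<Sum>e\<in>UNIV. sum (\<lambda>_. 1::nat) {x\<in>X. hd x = e}) = sum (\<lambda>_. 1) X"
    by (rule sum.group) (use fX in auto)
  hence "card X = (\<Sum>e\<in>UNIV. card {x\<in>X. hd x = e})" by simp
  moreover have "{x\<in>X. hd x = e} = Lset e t" for e unfolding X_def Lset_def by auto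
  ultimately have "card X = (\<Sum>e\<in>UNIV. card (Lset e t))" by simp
  moreover have "circuit_count org tau bar l t = card X" unfolding circuit_count_def X_def ell_def by simp
  ultimately show ?thesis unfolding Lc_def by simp
qed

lemma concat_bc:
  assumes "based_circuit org tau bar x" "based_circuit org tau bar y" "hd x = hd y"
  shows "based_circuit org tau bar (x @ y)"
proof -
  have x: "x \<noteq> []" "successively adj (x @ [hd x])" and y: "y \<noteq> []" "successively adj (y @ [hd y])"
    using assms(1,2) unfolding bc_iff by auto
  have "successively adj x" "adj (last x) (hd x)" using x by (auto simp: successively_append_iff)
  hence "successively adj (x @ (y @ [hd y]))" using y assms(3) by (auto simp: successively_append_iff)
  hence "successively adj (x @ (y @ [hd x]))" using assms(3) by simp
  thus ?thesis unfolding bc_iff using x by simp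
qed

lemma supermult:
  assumes a: "a \<ge> 0"
  shows "Lc e a * Lc e b \<le> (1 + a/lam) * Lc e (a+b)"
proof -
  define m where "m = nat \<lfloor>a/lam\<rfloor>"
  define f where "f = (\<lambda>(x::'e list, y::'e list). (length x, x @ y))"
  have inj: "inj_on f (Lset e a \<times> Lset e b)"
    unfolding f_def by (auto simp: inj_on_def append_eq_append_conv)
  have sub: "f ` (Lset e a \<times> Lset e b) \<subseteq> {0..m} \<times> Lset e (a+b)"
  proof
    fix p assume "p \<in> f ` (Lset e a \<times> Lset e b)"
    then obtain x y where p: "p = f (x, y)" and xa: "x \<in> Lset e a" and yb: "y \<in> Lset e b" by auto
    have bx: "based_circuit org tau bar x" "hd x = e" "ell x \<le> a" using xa unfolding Lset_def by auto
    have by': "based_circuit org tau bar y" "hd y = e" "ell y \<le> b" using yb unfolding Lset_def by auto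
    have xne: "x \<noteq> []" using bx(1) unfolding bc_iff by simp
    have "length x \<le> m" unfolding m_def using len_le[OF bx(3)] .
    moreover have "x @ y \<in> Lset e (a+b)" unfolding Lset_def
      using concat_bc[OF bx(1) by'(1)] bx by' xne by auto
    ultimately show "p \<in> {0..m} \<times> Lset e (a+b)" unfolding f_def p by auto
  qed
  have "card (Lset e a \<times> Lset e b) \<le> card ({0..m} \<times> Lset e (a+b))"
    by (rule card_inj_on_le[OF inj sub]) (simp add: fin_Lset)
  hence "card (Lset e a) * card (Lset e b) \<le> (m + 1) * card (Lset e (a+b))"
    by (simp add: card_cartesian_product)
  hence "Lc e a * Lc e b \<le> real (m + 1) * Lc e (a+b)" unfolding Lc_def by (metis of_nat_le_iff of_nat_mult)
  moreover have "real (m + 1) \<le> 1 + a/lam"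
  proof -
    have "a/lam \<ge> 0" using a lam_pos by simp
    hence "real m \<le> a/lam" unfolding m_def by linarith
    thus ?thesis by simp
  qed
  moreover have "Lc e (a+b) \<ge> 0" unfolding Lc_def by simp
  ultimately show ?thesis by (meson mult_right_mono order_trans)
qed

lemma ev_ge1: "\<exists>t0\<ge>0. \<forall>t\<ge>t0. Lc e t \<ge> 1"
proof -
  obtain ws where ws: "successively adj (e # ws @ [e])" using reach_all unfolding reach_def by blast
  have bc: "based_circuit org tau bar (e # ws)" unfolding bc_iff using ws by simp
  have "Lc e t \<ge> 1" if "t \<ge> ell (e # ws)" for t
  proof -
    have "e # ws \<in> Lset e t" unfolding Lset_def using bc that by simp
    hence "card (Lset e t) \<noteq> 0" using fin_Lset by auto
    thus ?thesis unfolding Lc_def by simp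
  qed
  thus ?thesis using ell_nonneg by blast
qed

lemma upper_bound: "t \<ge> 0 \<Longrightarrow> ln (Lc e t) \<le> (ln (2 * real CARD('e)) / lam) * t"
proof -
  assume t: "t \<ge> 0"
  define n where "n = nat \<lfloor>t/lam\<rfloor>"
  define C where "C = CARD('e)"
  have C1: "C \<ge> 1" unfolding C_def by (simp add: Suc_leI)
  have "Lset e t \<subseteq> {xs. set xs \<subseteq> UNIV \<and> length xs \<le> n}" unfolding Lset_def n_def using len_le by auto
  moreover have "finite {xs. set xs \<subseteq> (UNIV::'e set) \<and> length xs \<le> n}" by (rule finite_lists_length_le) simp
  ultimately have "card (Lset e t) \<le> card {xs. set xs \<subseteq> (UNIV::'e set) \<and> length xs \<le> n}"
    by (intro card_mono)
  also have "\<dots> = (\<Sum>i\<le>n. C^i)" unfolding C_def by (rule card_lists_length_le) simp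
  also have "\<dots> \<le> of_nat (card {..n}) * C^n" by (rule sum_bounded_above) (use C1 in \<open>simp add: power_increasing\<close>)
  also have "\<dots> = Suc n * C^n" by simp
  also have "\<dots> \<le> 2^n * C^n" using less_exp[of n] by (intro mult_right_mono) (simp_all add: Suc_le_eq)
  also have "\<dots> = (2*C)^n" by (simp add: power_mult_distrib)
  finally have cb: "Lc e t \<le> (2 * real C)^n" unfolding Lc_def by (metis of_nat_le_iff of_nat_numeral of_nat_mult of_nat_power)
  have l2: "ln (2 * real C) \<ge> 0" using C1 by simp
  have nle: "real n \<le> t/lam" unfolding n_def using t lam_pos by simp
  show ?thesis
  proof (cases "Lc e t = 0")
    case True thus ?thesis using l2 t lam_pos unfolding C_def by simp
  next
    case False
    hence "Lc e t > 0" unfolding Lc_def by simp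
    hence "ln (Lc e t) \<le> ln ((2 * real C)^n)" using cb C1 by (subst ln_le_cancel_iff) auto
    also have "\<dots> = real n * ln (2 * real C)" using C1 by (intro ln_realpow)
    also have "\<dots> \<le> (t/lam) * ln (2 * real C)" using nle l2 by (rule mult_right_mono)
    finally show ?thesis unfolding C_def by (simp add: algebra_simps)
  qed
qed

lemma Lc_lim: "\<exists>H. ((\<lambda>t. ln (Lc e t) / t) \<longlongrightarrow> H) at_top"
proof -
  obtain t0 where t0: "t0 \<ge> 0" "\<forall>t\<ge>t0. Lc e t \<ge> 1" using ev_ge1 by blast
  have h1: "\<And>t. t \<ge> t0 \<Longrightarrow> Lc e t \<ge> 1" using t0 by blast
  have h2: "\<And>t. Lc e t \<ge> 0" unfolding Lc_def by simp
  have h3: "\<And>t. t \<ge> t0 \<Longrightarrow> ln (Lc e t) \<le> ln (2 * real CARD('e)) / lam * t"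
      using upper_bound t0 by simp
  have h4: "\<And>a b. a \<ge> 0 \<Longrightarrow> b \<ge> 0 \<Longrightarrow> Lc e a * Lc e b \<le> (1 + a/lam) * Lc e (a+b)"
      by (rule supermult)
  show ?thesis by (rule fekete_like[OF lam_pos t0(1) h1 h2 h3 h4])
qed

lemma entropy_tendsto:
  "((\<lambda>t. ln (real (circuit_count org tau bar l t)) / t) \<longlongrightarrow> entropy org tau bar l) at_top"
proof -
  obtain H where H: "\<And>e. ((\<lambda>t. ln (Lc e t) / t) \<longlongrightarrow> H e) at_top"
    using Lc_lim by metis
  have ge: "eventually (\<lambda>t. Lc e t \<ge> 1) at_top" for e
    using ev_ge1[of e] by (auto simp: eventually_at_top_linorder)
  have "((\<lambda>t. ln (\<Sum>e\<in>UNIV. Lc e t) / t) \<longlongrightarrow> Max (range H)) at_top"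
    by (rule max_combine[OF H ge])
  hence lim: "((\<lambda>t. ln (real (circuit_count org tau bar l t)) / t) \<longlongrightarrow> Max (range H)) at_top"
    by (simp add: count_sum)
  hence "entropy org tau bar l = Max (range H)" unfolding entropy_def by (intro tendsto_Lim) auto
  with lim show ?thesis by simp
qed

end



context gsetting begin

definition Aw :: "'e \<Rightarrow> 'e \<Rightarrow> real" where "Aw e g = (if adj e g then exp (- l e) else 0)"

lemma Aw_nonneg: "Aw e g \<ge> 0" unfolding Aw_def by simp

primrec M :: "nat \<Rightarrow> 'e \<Rightarrow> 'e \<Rightarrow> real" where
  "M 0 e f = (if e = f then 1 else 0)"
| "M (Suc n) e f = (\<Sum>g\<in>UNIV. Aw e g * M n g f)"

lemma M_nonneg: "M n e f \<ge> 0"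
  by (induction n arbitrary: e) (auto intro!: sum_nonneg mult_nonneg_nonneg Aw_nonneg)

lemma M_add: "M (a + b) e f = (\<Sum>g\<in>UNIV. M a e g * M b g f)"
proof (induction a arbitrary: e)
  case 0
  have "(\<Sum>g\<in>UNIV. M 0 e g * M b g f) = (\<Sum>g\<in>UNIV. if e = g then M b g f else 0)" by (rule sum.cong) auto
  thus ?case by simp
next
  case (Suc a)
  have "M (Suc a + b) e f = (\<Sum>h\<in>UNIV. Aw e h * (\<Sum>g\<in>UNIV. M a h g * M b g f))"
    using Suc by simp
  also have "\<dots> = (\<Sum>h\<in>UNIV. \<Sum>g\<in>UNIV. Aw e h * M a h g * M b g f)"
    by (simp add: sum_distrib_left mult.assoc)
  also have "\<dots> = (\<Sum>g\<in>UNIV. \<Sum>h\<in>UNIV. Aw e h * M a h g * M b g f)" by (rule sum.swap)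
  also have "\<dots> = (\<Sum>g\<in>UNIV. M (Suc a) e g * M b g f)" by (simp add: sum_distrib_right)
  finally show ?case .
qed

lemma M_pos: "successively adj (e # ws) \<Longrightarrow> M (length ws) e (last (e # ws)) > 0"
proof (induction ws arbitrary: e)
  case Nil thus ?case by simp
next
  case (Cons g ws)
  have a: "adj e g" and s: "successively adj (g # ws)" using Cons.prems by auto
  have ih: "M (length ws) g (last (g # ws)) > 0" using Cons.IH[OF s] .
  have "M (length (g # ws)) e (last (e # g # ws)) = (\<Sum>h\<in>UNIV. Aw e h * M (length ws) h (last (g # ws)))" by simp
  also have "\<dots> \<ge> Aw e g * M (length ws) g (last (g # ws))"
    by (rule member_le_sum) (auto intro!: mult_nonneg_nonneg Aw_nonneg M_nonneg)
  finally show ?case using ih a unfolding Aw_def by (smt (verit) exp_gt_zero mult_pos_pos)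
qed

definition P :: "nat \<Rightarrow> 'e \<Rightarrow> 'e \<Rightarrow> 'e list set" where
  "P n e f = {ws. length ws = n \<and> successively adj (e # ws) \<and> last (e # ws) = f}"

lemma fin_P: "finite (P n e f)"
proof (rule finite_subset)
  show "P n e f \<subseteq> {xs. set xs \<subseteq> UNIV \<and> length xs = n}" unfolding P_def by auto
  show "finite {xs. set xs \<subseteq> (UNIV::'e set) \<and> length xs = n}" by (rule finite_lists_length_eq) simp
qed

lemma M_paths: "M n e f = (\<Sum>ws\<in>P n e f. exp (- ell (butlast (e # ws))))"
proof (induction n arbitrary: e)
  case 0
  have "P 0 e f = (if e = f then {[]} else {})" unfolding P_def by auto
  thus ?case by simp
next
  case (Suc n)
  define S where "S = (SIGMA g:{g. adj e g}. P n g f)"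
  have img: "P (Suc n) e f = (\<lambda>(g, ws). g # ws) ` S"
  proof
    show "P (Suc n) e f \<subseteq> (\<lambda>(g, ws). g # ws) ` S"
    proof
      fix xs assume "xs \<in> P (Suc n) e f"
      then obtain g ws where xs: "xs = g # ws" and h: "length ws = n" "successively adj (e # g # ws)" "last (e # g # ws) = f"
        unfolding P_def by (cases xs) auto
      have "(g, ws) \<in> S" unfolding S_def P_def using h by auto
      thus "xs \<in> (\<lambda>(g, ws). g # ws) ` S" using xs by force
    qed
    show "(\<lambda>(g, ws). g # ws) ` S \<subseteq> P (Suc n) e f"
      unfolding S_def P_def by auto
  qed
  have inj: "inj_on (\<lambda>(g, ws). g # ws) S" by (auto simp: inj_on_def)
  have "(\<Sum>ws\<in>P (Suc n) e f. exp (- ell (butlast (e # ws)))) = (\<Sum>(g, ws)\<in>S. exp (- ell (butlast (e # g # ws))))"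
    unfolding img by (subst sum.reindex[OF inj]) (simp add: case_prod_unfold)
  also have "\<dots> = (\<Sum>g\<in>{g. adj e g}. \<Sum>ws\<in>P n g f. exp (- ell (butlast (e # g # ws))))"
    unfolding S_def by (rule sum.Sigma[symmetric]) (auto simp: fin_P)
  also have "\<dots> = (\<Sum>g\<in>{g. adj e g}. exp (- l e) * M n g f)"
    by (rule sum.cong) (simp_all add: Suc sum_distrib_left exp_add[symmetric] exp_diff)
  also have "\<dots> = (\<Sum>g\<in>UNIV. if adj e g then exp (- l e) * M n g f else 0)"
    using sum.inter_filter[of UNIV "\<lambda>g. exp (- l e) * M n g f" "adj e"] by simp
  also have "\<dots> = (\<Sum>g\<in>UNIV. Aw e g * M n g f)"
    by (rule sum.cong) (auto simp: Aw_def)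
  finally show ?case by simp
qed

definition circ :: "nat \<Rightarrow> 'e list set" where
  "circ m = {\<gamma>. based_circuit org tau bar \<gamma> \<and> length \<gamma> = m}"

lemma fin_circ: "finite (circ m)"
proof (rule finite_subset)
  show "circ m \<subseteq> {xs. set xs \<subseteq> UNIV \<and> length xs = m}" unfolding circ_def by auto
  show "finite {xs. set xs \<subseteq> (UNIV::'e set) \<and> length xs = m}" by (rule finite_lists_length_eq) simp
qed

lemma M_circ_e: "m \<ge> 1 \<Longrightarrow> M m e e = (\<Sum>\<gamma>\<in>{\<gamma>\<in>circ m. hd \<gamma> = e}. exp (- ell \<gamma>))"
proof -
  assume m: "m \<ge> 1"
  have "(\<Sum>\<gamma>\<in>{\<gamma>\<in>circ m. hd \<gamma> = e}. exp (- ell \<gamma>)) = (\<Sum>ws\<in>P m e e. exp (- ell (butlast (e # ws))))"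
  proof (rule sum.reindex_bij_witness[where i = "\<lambda>ws. e # butlast ws" and j = "\<lambda>\<gamma>. tl \<gamma> @ [e]"])
    fix \<gamma> assume g: "\<gamma> \<in> {\<gamma>\<in>circ m. hd \<gamma> = e}"
    hence bc: "\<gamma> \<noteq> []" "successively adj (\<gamma> @ [hd \<gamma>])" "length \<gamma> = m" "hd \<gamma> = e"
      unfolding circ_def bc_iff by auto
    hence ge: "\<gamma> = e # tl \<gamma>" by (metis list.collapse)
    show "e # butlast (tl \<gamma> @ [e]) = \<gamma>" using ge by simp
    have "successively adj (e # tl \<gamma> @ [e])" using bc(2) ge bc(4) by (metis append_Cons)
    thus "tl \<gamma> @ [e] \<in> P m e e" unfolding P_def using bc(3) ge by (cases \<gamma>) auto
    show "exp (- ell (butlast (e # tl \<gamma> @ [e]))) = exp (- ell \<gamma>)" using ge by (metis butlast_snoc append_Cons)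
  next
    fix ws assume w: "ws \<in> P m e e"
    hence h: "length ws = m" "successively adj (e # ws)" "last (e # ws) = e" unfolding P_def by auto
    have wne: "ws \<noteq> []" using h(1) m by auto
    have wl: "ws = butlast ws @ [e]" using h(3) wne append_butlast_last_id[of ws] by simp
    show "tl (e # butlast ws) @ [e] = ws" using wl by simp
    have "successively adj ((e # butlast ws) @ [hd (e # butlast ws)])" using h(2) wl by (metis append_Cons list.sel(1))
    moreover have "length (e # butlast ws) = m" using h(1) m by simp
    ultimately show "e # butlast ws \<in> {\<gamma>\<in>circ m. hd \<gamma> = e}" unfolding circ_def bc_iff by simp
  qed
  thus ?thesis using M_paths by simp
qed

definition Z :: "nat \<Rightarrow> real" where "Z m = (\<Sum>e\<in>UNIV. M m e e)"

lemma Z_circ: "m \<ge> 1 \<Longrightarrow> Z m = (\<Sum>\<gamma>\<in>circ m. exp (- ell \<gamma>))"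
proof -
  assume m: "m \<ge> 1"
  have "Z m = (\<Sum>e\<in>UNIV. \<Sum>\<gamma>\<in>{\<gamma>\<in>circ m. hd \<gamma> = e}. exp (- ell \<gamma>))" unfolding Z_def using M_circ_e[OF m] by simp
  also have "\<dots> = (\<Sum>\<gamma>\<in>circ m. exp (- ell \<gamma>))" by (rule sum.group) (auto simp: fin_circ)
  finally show ?thesis .
qed

end



context gsetting begin

definition Ncnt :: "real \<Rightarrow> real" where "Ncnt t = real (circuit_count org tau bar l t)"

lemma Ncnt_mono: "t \<le> t' \<Longrightarrow> Ncnt t \<le> Ncnt t'"
proof -
  assume "t \<le> t'"
  have "card {\<gamma>. based_circuit org tau bar \<gamma> \<and> ell \<gamma> \<le> t} \<le> card {\<gamma>. based_circuit org tau bar \<gamma> \<and> ell \<gamma> \<le> t'}"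
    by (rule card_mono[OF fin_bounded]) (use \<open>t \<le> t'\<close> in auto)
  thus ?thesis unfolding Ncnt_def circuit_count_def ell_def by simp
qed

lemma Ncnt_nonneg: "Ncnt t \<ge> 0" unfolding Ncnt_def by simp

lemma Z_sum: "(\<Sum>k\<in>{1..n}. Z k) = (\<Sum>\<gamma>\<in>{\<gamma>. based_circuit org tau bar \<gamma> \<and> length \<gamma> \<le> n}. exp (- ell \<gamma>))"
proof -
  define X where "X = {\<gamma>. based_circuit org tau bar \<gamma> \<and> length \<gamma> \<le> n}"
  have fX: "finite X"
  proof (rule finite_subset)
    show "X \<subseteq> {xs. set xs \<subseteq> UNIV \<and> length xs \<le> n}" unfolding X_def by auto
    show "finite {xs. set xs \<subseteq> (UNIV::'e set) \<and> length xs \<le> n}" by (rule finite_lists_length_le) simp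
  qed
  have "(\<Sum>k\<in>{1..n}. Z k) = (\<Sum>k\<in>{1..n}. \<Sum>\<gamma>\<in>{\<gamma>\<in>X. length \<gamma> = k}. exp (- ell \<gamma>))"
  proof (rule sum.cong)
    fix k assume "k \<in> {1..n}"
    hence "{\<gamma>\<in>X. length \<gamma> = k} = circ k" "k \<ge> 1" unfolding X_def circ_def by auto
    thus "Z k = (\<Sum>\<gamma>\<in>{\<gamma>\<in>X. length \<gamma> = k}. exp (- ell \<gamma>))" using Z_circ by simp
  qed simp
  also have "\<dots> = (\<Sum>\<gamma>\<in>X. exp (- ell \<gamma>))"
  proof (rule sum.group[OF fX])
    show "finite {1..n}" by simp
    show "length ` X \<subseteq> {1..n}" unfolding X_def bc_iff by (auto simp: Suc_le_eq)
  qed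
  finally show ?thesis unfolding X_def .
qed

lemma upper_Z:
  assumes h: "entropy org tau bar l < 1"
  shows "\<exists>B. \<forall>n. (\<Sum>k\<in>{1..n}. Z k) \<le> B"
proof -
  define h0 where "h0 = entropy org tau bar l"
  define mx where "mx = max h0 0"
  define s where "s = (mx + 1)/2"
  have hh: "h0 < 1" using h unfolding h0_def .
  have m: "mx \<ge> h0" "mx \<ge> 0" "mx < 1" using hh unfolding mx_def by auto
  have sa: "s > h0" unfolding s_def using m by (simp add: field_simps)
  have sb: "s < 1" unfolding s_def using m by (simp add: field_simps)
  have sc: "s > 0" unfolding s_def using m by (simp add: field_simps)
  note s = sa sb sc
  have "eventually (\<lambda>t. ln (Ncnt t) / t < s) at_top"
    using order_tendstoD(2)[OF entropy_tendsto s(1)[unfolded h0_def]] unfolding Ncnt_def .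
  moreover have "eventually (\<lambda>t::real. t \<ge> 1) at_top" by (rule eventually_ge_at_top)
  ultimately have "eventually (\<lambda>t. ln (Ncnt t) / t < s \<and> t \<ge> 1) at_top" by (rule eventually_conj)
  then obtain k0 where k0: "\<And>t. t \<ge> k0 \<Longrightarrow> ln (Ncnt t) / t < s \<and> t \<ge> 1"
    unfolding eventually_at_top_linorder by blast
  define C1 where "C1 = Ncnt (max k0 0) + 1"
  have C1: "C1 \<ge> 1" unfolding C1_def using Ncnt_nonneg by simp
  have Nb: "Ncnt t \<le> C1 * exp (s * t)" if "t \<ge> 0" for t
  proof (cases "t \<ge> k0")
    case True
    have "Ncnt t \<le> exp (s * t)"
    proof (cases "Ncnt t = 0")
      case True thus ?thesis by simp
    next
      case False
      hence pos: "Ncnt t > 0" using Ncnt_nonneg by (simp add: less_le)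
      have "ln (Ncnt t) / t < s" "t \<ge> 1" using k0[OF True] by auto
      hence "ln (Ncnt t) < s * t" by (simp add: divide_less_eq mult.commute)
      hence "exp (ln (Ncnt t)) < exp (s * t)" by simp
      thus ?thesis using pos by simp
    qed
    also have "\<dots> \<le> C1 * exp (s * t)" using C1 by simp
    finally show ?thesis .
  next
    case False
    hence "Ncnt t \<le> Ncnt (max k0 0)" by (intro Ncnt_mono) simp
    also have "\<dots> \<le> C1" unfolding C1_def by simp
    also have "\<dots> \<le> C1 * exp (s * t)" using C1 s that by simp
    finally show ?thesis .
  qed
  define q where "q = exp (s - 1)"
  have q: "q > 0" "q < 1" unfolding q_def using s by auto
  define B where "B = C1 * exp 1 / (1 - q)"
  have "(\<Sum>k\<in>{1..n}. Z k) \<le> B" for n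
  proof -
    define X where "X = {\<gamma>. based_circuit org tau bar \<gamma> \<and> length \<gamma> \<le> n}"
    have fX: "finite X"
    proof (rule finite_subset)
      show "X \<subseteq> {xs. set xs \<subseteq> UNIV \<and> length xs \<le> n}" unfolding X_def by auto
      show "finite {xs. set xs \<subseteq> (UNIV::'e set) \<and> length xs \<le> n}" by (rule finite_lists_length_le) simp
    qed
    define c where "c \<gamma> = nat \<lceil>ell \<gamma>\<rceil>" for \<gamma>
    have cge: "real (c \<gamma>) \<ge> ell \<gamma>" "real (c \<gamma>) \<le> ell \<gamma> + 1" for \<gamma>
      unfolding c_def using ell_nonneg[of \<gamma>] by linarith+
    have "(\<Sum>\<gamma>\<in>X. exp (- ell \<gamma>)) \<le> (\<Sum>\<gamma>\<in>X. exp 1 * exp (- real (c \<gamma>)))"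
    proof (rule sum_mono)
      fix \<gamma> show "exp (- ell \<gamma>) \<le> exp 1 * exp (- real (c \<gamma>))"
        using cge[of \<gamma>] by (simp add: exp_add[symmetric])
    qed
    also have "\<dots> = (\<Sum>k\<in>c ` X. \<Sum>\<gamma>\<in>{\<gamma>\<in>X. c \<gamma> = k}. exp 1 * exp (- real (c \<gamma>)))"
      by (rule sum.group[symmetric]) (use fX in auto)
    also have "\<dots> = (\<Sum>k\<in>c ` X. exp 1 * exp (- real k) * real (card {\<gamma>\<in>X. c \<gamma> = k}))"
      by (rule sum.cong) auto
    also have "\<dots> \<le> (\<Sum>k\<in>c ` X. exp 1 * exp (- real k) * Ncnt (real k))"
    proof (rule sum_mono)
      fix k assume "k \<in> c ` X"
      have "{\<gamma>\<in>X. c \<gamma> = k} \<subseteq> {\<gamma>. based_circuit org tau bar \<gamma> \<and> ell \<gamma> \<le> real k}"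
        unfolding X_def using cge by auto
      hence "card {\<gamma>\<in>X. c \<gamma> = k} \<le> card {\<gamma>. based_circuit org tau bar \<gamma> \<and> ell \<gamma> \<le> real k}"
        by (rule card_mono[OF fin_bounded])
      hence "real (card {\<gamma>\<in>X. c \<gamma> = k}) \<le> Ncnt (real k)"
        unfolding Ncnt_def circuit_count_def ell_def by simp
      thus "exp 1 * exp (- real k) * real (card {\<gamma>\<in>X. c \<gamma> = k}) \<le> exp 1 * exp (- real k) * Ncnt (real k)"
        by (intro mult_left_mono) auto
    qed
    also have "\<dots> \<le> (\<Sum>k\<in>c ` X. C1 * exp 1 * q ^ k)"
    proof (rule sum_mono)
      fix k
      have "exp 1 * exp (- real k) * Ncnt (real k) \<le> exp 1 * exp (- real k) * (C1 * exp (s * real k))"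
        using Nb[of "real k"] by (intro mult_left_mono) auto
      also have "\<dots> = C1 * exp 1 * exp (real k * (s - 1))"
        by (simp add: algebra_simps exp_add[symmetric])
      also have "exp (real k * (s - 1)) = q ^ k" unfolding q_def by (rule exp_of_nat_mult)
      finally show "exp 1 * exp (- real k) * Ncnt (real k) \<le> C1 * exp 1 * q ^ k" by simp
    qed
    also obtain R where R: "c ` X \<subseteq> {..<R}" using fX finite_nat_iff_bounded by (metis finite_imageI)
    hence "(\<Sum>k\<in>c ` X. C1 * exp 1 * q ^ k) \<le> (\<Sum>k<R. C1 * exp 1 * q ^ k)"
      using C1 q by (intro sum_mono2) auto
    also have "\<dots> = C1 * exp 1 * (\<Sum>k<R. q ^ k)" by (simp add: sum_distrib_left)
    also have "(\<Sum>k<R. q ^ k) = (1 - q^R) / (1 - q)" using q by (simp add: sum_gp_strict)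
    also have "\<dots> \<le> 1 / (1 - q)" using q by (simp add: divide_right_mono)
    finally have "(\<Sum>\<gamma>\<in>X. exp (- ell \<gamma>)) \<le> C1 * exp 1 * (1 / (1 - q))"
      using C1 by (smt (verit) mult_left_mono exp_gt_zero mult_nonneg_nonneg)
    thus ?thesis unfolding Z_sum B_def X_def[symmetric] by simp
  qed
  thus ?thesis by blast
qed

end



context gsetting begin

lemma Z_nonneg: "Z m \<ge> 0" unfolding Z_def by (intro sum_nonneg) (simp add: M_nonneg)

lemma lower_Z:
  assumes y0: "\<And>e. y e \<ge> 0" and ypos: "\<exists>e. y e > 0" and ysub: "\<And>e. y e \<le> (\<Sum>g\<in>UNIV. Aw e g * y g)"
  shows "\<exists>c>0. \<exists>K\<ge>1. \<forall>n. (\<Sum>k\<in>{1..K}. Z (n+k)) \<ge> c"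
proof -
  have "Max (range y) \<in> range y" by (rule Max_in) auto
  then obtain i0 where i0: "y i0 = Max (range y)" by (metis imageE)
  have ymax: "y e \<le> y i0" for e unfolding i0 by simp
  have yi0: "y i0 > 0" using ypos ymax by (meson less_le_trans)
  have Q: "y e \<le> (\<Sum>f\<in>UNIV. M n e f * y f)" for n e
  proof (induction n arbitrary: e)
    case 0
    have "(\<Sum>f\<in>UNIV. M 0 e f * y f) = (\<Sum>f\<in>UNIV. if e = f then y f else 0)" by (rule sum.cong) auto
    thus ?case by simp
  next
    case (Suc n)
    have "y e \<le> (\<Sum>g\<in>UNIV. Aw e g * y g)" by (rule ysub)
    also have "\<dots> \<le> (\<Sum>g\<in>UNIV. Aw e g * (\<Sum>f\<in>UNIV. M n g f * y f))"
      by (intro sum_mono mult_left_mono Suc.IH Aw_nonneg)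
    also have "\<dots> = (\<Sum>g\<in>UNIV. \<Sum>f\<in>UNIV. Aw e g * M n g f * y f)" by (simp add: sum_distrib_left mult.assoc)
    also have "\<dots> = (\<Sum>f\<in>UNIV. \<Sum>g\<in>UNIV. Aw e g * M n g f * y f)" by (rule sum.swap)
    also have "\<dots> = (\<Sum>f\<in>UNIV. M (Suc n) e f * y f)" by (simp add: sum_distrib_right)
    finally show ?case .
  qed
  have R: "(\<Sum>f\<in>UNIV. M n i0 f) \<ge> 1" for n
  proof -
    have "y i0 \<le> (\<Sum>f\<in>UNIV. M n i0 f * y f)" by (rule Q)
    also have "\<dots> \<le> (\<Sum>f\<in>UNIV. M n i0 f * y i0)" by (intro sum_mono mult_left_mono ymax M_nonneg)
    also have "\<dots> = (\<Sum>f\<in>UNIV. M n i0 f) * y i0" by (simp add: sum_distrib_right)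
    finally show ?thesis using yi0 by simp
  qed
  have "\<forall>j. \<exists>k. k \<ge> 1 \<and> M k j i0 > 0"
  proof
    fix j
    obtain ws where "successively adj (j # ws @ [i0])" using reach_all unfolding reach_def by blast
    hence "M (length (ws @ [i0])) j (last (j # ws @ [i0])) > 0" using M_pos by (metis append_Cons)
    thus "\<exists>k. k \<ge> 1 \<and> M k j i0 > 0" by (intro exI[of _ "length (ws @ [i0])"]) simp
  qed
  then obtain kf where kf: "\<And>j. kf j \<ge> 1 \<and> M (kf j) j i0 > 0" by metis
  define K where "K = Max (range kf)"
  have kfK: "kf j \<le> K" for j unfolding K_def by simp
  have K1: "K \<ge> 1" using kf kfK by (meson order_trans)
  define cj where "cj j = (\<Sum>k\<in>{1..K}. M k j i0)" for j
  have cjpos: "cj j > 0" for j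
  proof -
    have "M (kf j) j i0 \<le> cj j" unfolding cj_def
      by (rule member_le_sum) (use kf kfK M_nonneg in auto)
    thus ?thesis using kf by (meson less_le_trans)
  qed
  define c where "c = Min (range cj)"
  have "c \<in> range cj" unfolding c_def by (rule Min_in) auto
  hence cpos: "c > 0" using cjpos by auto
  have cle: "c \<le> cj j" for j unfolding c_def by simp
  have "(\<Sum>k\<in>{1..K}. Z (n+k)) \<ge> c" for n
  proof -
    have "c \<le> c * (\<Sum>f\<in>UNIV. M n i0 f)" using R[of n] cpos by simp
    also have "\<dots> = (\<Sum>j\<in>UNIV. M n i0 j * c)" by (simp add: sum_distrib_left mult.commute)
    also have "\<dots> \<le> (\<Sum>j\<in>UNIV. M n i0 j * cj j)" by (intro sum_mono mult_left_mono cle M_nonneg)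
    also have "\<dots> = (\<Sum>j\<in>UNIV. \<Sum>k\<in>{1..K}. M n i0 j * M k j i0)" unfolding cj_def by (simp add: sum_distrib_left)
    also have "\<dots> = (\<Sum>k\<in>{1..K}. \<Sum>j\<in>UNIV. M n i0 j * M k j i0)" by (rule sum.swap)
    also have "\<dots> = (\<Sum>k\<in>{1..K}. M (n+k) i0 i0)" by (simp add: M_add)
    also have "\<dots> \<le> (\<Sum>k\<in>{1..K}. Z (n+k))"
      unfolding Z_def by (intro sum_mono member_le_sum) (auto simp: M_nonneg)
    finally show ?thesis .
  qed
  thus ?thesis using cpos K1 by blast
qed

lemma blocks:
  assumes "\<And>n. (\<Sum>k\<in>{1..K}. Z (n+k)) \<ge> c"
  shows "(\<Sum>k\<in>{1..q*K}. Z k) \<ge> real q * c"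
proof (induction q)
  case 0 thus ?case by simp
next
  case (Suc q)
  have un: "{1..Suc q * K} = {1..q*K} \<union> {1 + q*K..K + q*K}" by auto
  have dj: "{1..q*K} \<inter> {1 + q*K..K + q*K} = {}" by auto
  have "(\<Sum>k\<in>{1..Suc q * K}. Z k) = (\<Sum>k\<in>{1..q*K}. Z k) + (\<Sum>k\<in>{1 + q*K..K + q*K}. Z k)"
    unfolding un by (rule sum.union_disjoint) (use dj in auto)
  also have "(\<Sum>k\<in>{1 + q*K..K + q*K}. Z k) = (\<Sum>k\<in>{1..K}. Z (k + q*K))" by (rule sum.shift_bounds_cl_nat_ivl)
  also have "\<dots> = (\<Sum>k\<in>{1..K}. Z (q*K + k))" by (simp add: add.commute)
  finally show ?case using Suc.IH assms[of "q*K"] by (simp add: algebra_simps)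
qed

end

theorem mainTheorem8:
  fixes org tau :: "'e::finite \<Rightarrow> 'v::finite" and bar :: "'e \<Rightarrow> 'e" and l :: "'e \<Rightarrow> real"
  assumes "serre_graph org tau bar"
    and "graph_connected org tau"
    and "euler_char org < 0"
    and "\<forall>v. valence org v \<noteq> 1 \<and> valence org v \<noteq> 2"
    and "length_fun bar l"
    and "entropy org tau bar l < 1"
  shows "F_G org tau bar l > 0"
proof -
  interpret gsetting org tau bar l using assms(1-5) by unfold_locales
  show ?thesis
  proof (rule ccontr)
    assume "\<not> F_G org tau bar l > 0"
    hence F0: "F_G org tau bar l \<le> 0" by simp
    define A where "A = trans_matrix org tau bar l"
    have Aw_eq: "A $ i $ j = Aw i j" for i j by (simp add: A_def trans_matrix_def Aw_def adj_def)
    define g where "g s = det (mat 1 - s *\<^sub>R A)" for s :: real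
    have geq: "g = (\<lambda>s. \<Sum>p\<in>{p. p permutes UNIV}. of_int (sign p) * (\<Prod>i\<in>UNIV. (if i = p i then 1 else 0) - s * A $ i $ p i))"
      unfolding g_def det_def by (simp add: fun_eq_iff mat_def)
    have cont: "isCont g x" for x unfolding geq by (intro continuous_intros)
    have g0: "g 0 = 1" unfolding g_def by simp
    have g1: "g 1 \<le> 0" using F0 unfolding g_def F_G_def A_def by simp
    obtain s where s: "0 \<le> s" "s \<le> 1" "g s = 0" using IVT2[of g 1 0 0] g0 g1 cont by auto
    have s0: "s > 0" using s g0 by (metis less_eq_real_def zero_neq_one)
    define Mx where "Mx = mat 1 - s *\<^sub>R A"
    have "\<not> inj (\<lambda>x. Mx *v x)"
      using det_nz_iff_inj[of "\<lambda>x. Mx *v x"] s(3) unfolding g_def Mx_def by simp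
    then obtain u v where uv: "u \<noteq> v" "Mx *v u = Mx *v v" unfolding inj_def by blast
    define x where "x = u - v"
    have x0: "x \<noteq> 0" using uv unfolding x_def by simp
    have Mx0: "Mx *v x = 0" using uv unfolding x_def by (simp add: matrix_vector_mult_diff_distrib)
    have comp: "x $ i = s * (\<Sum>j\<in>UNIV. Aw i j * x $ j)" for i
    proof -
      have "0 = (Mx *v x) $ i" using Mx0 by simp
      also have "\<dots> = (\<Sum>j\<in>UNIV. ((if i = j then 1 else 0) - s * Aw i j) * x $ j)"
        unfolding Mx_def by (simp add: matrix_vector_mult_def mat_def Aw_eq)
      also have "\<dots> = (\<Sum>j\<in>UNIV. (if i = j then x $ j else 0)) - s * (\<Sum>j\<in>UNIV. Aw i j * x $ j)"
      proof -
        have "(\<Sum>j\<in>UNIV. ((if i = j then 1 else 0) - s * Aw i j) * x $ j)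
            = (\<Sum>j\<in>UNIV. (if i = j then x $ j else 0) - s * (Aw i j * x $ j))"
          by (rule sum.cong) (auto simp: algebra_simps)
        also have "\<dots> = (\<Sum>j\<in>UNIV. (if i = j then x $ j else 0)) - s * (\<Sum>j\<in>UNIV. Aw i j * x $ j)"
          by (simp add: sum_subtractf sum_distrib_left)
        finally show ?thesis .
      qed
      also have "\<dots> = x $ i - s * (\<Sum>j\<in>UNIV. Aw i j * x $ j)" by simp
      finally show ?thesis by simp
    qed
    define y where "y i = \<bar>x $ i\<bar>" for i
    have y0: "y e \<ge> 0" for e unfolding y_def by simp
    have ypos: "\<exists>e. y e > 0"
    proof -
      obtain i where "x $ i \<noteq> 0" using x0 by (metis vec_eq_iff zero_index)
      thus ?thesis unfolding y_def by auto
    qed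
    have ysub: "y e \<le> (\<Sum>g\<in>UNIV. Aw e g * y g)" for e
    proof -
      have "y e = s * \<bar>\<Sum>j\<in>UNIV. Aw e j * x $ j\<bar>" unfolding y_def using comp[of e] s0 by (simp add: abs_mult)
      also have "\<bar>\<Sum>j\<in>UNIV. Aw e j * x $ j\<bar> \<le> (\<Sum>j\<in>UNIV. Aw e j * y j)"
        unfolding y_def using Aw_nonneg by (auto intro!: order_trans[OF sum_abs] sum_mono simp: abs_mult)
      hence "s * \<bar>\<Sum>j\<in>UNIV. Aw e j * x $ j\<bar> \<le> s * (\<Sum>j\<in>UNIV. Aw e j * y j)" using s0 by simp
      also have "\<dots> \<le> (\<Sum>j\<in>UNIV. Aw e j * y j)"
      proof -
        have "(\<Sum>j\<in>UNIV. Aw e j * y j) \<ge> 0" using Aw_nonneg y0 by (intro sum_nonneg) simp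
        thus ?thesis using s(2) mult_right_mono[of s 1 "\<Sum>j\<in>UNIV. Aw e j * y j"] by simp
      qed
      finally show ?thesis .
    qed
    obtain c K where cK: "c > 0" "\<And>n. (\<Sum>k\<in>{1..K}. Z (n+k)) \<ge> c"
      using lower_Z[of y, OF y0 ypos ysub] by blast
    obtain B where B: "\<And>n. (\<Sum>k\<in>{1..n}. Z k) \<le> B" using upper_Z assms(6) by blast
    define q where "q = nat \<lceil>B / c\<rceil> + 1"
    have "real q * c > B"
    proof -
      have "real q > B / c" unfolding q_def by linarith
      thus ?thesis using cK(1) by (simp add: divide_less_eq)
    qed
    moreover have "(\<Sum>k\<in>{1..q*K}. Z k) \<ge> real q * c" by (rule blocks[OF cK(2)])
    ultimately show False using B[of "q*K"] by linarith
  qed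
qed


end
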